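(* Let $q\in\mathbb{CP}^N$, $\alpha\in[0,\pi]$, and let $e_1,e_2,e_3,e_4\in T_q\mathbb{CP}^N$ be $g_{FS}$-orthonormal vectors satisfying $J_{FS}e_1=\cos\alpha\, e_2+\sin\alpha\, e_3$, $J_{FS}e_2=-\cos\alpha\, e_1-\sin\alpha\, e_4$, $J_{FS}e_3=-\sin\alpha\, e_1+\cos\alpha\, e_4$. Then there exists a Killing vector field $V$ of $(\mathbb{CP}^N,g_{FS})$ such that $$\big[\langle\bar\nabla_{e_1}V,e_3\rangle+\langle\bar\nabla_{e_2}V,e_4\rangle\big](q)=1\quad\text{and}\quad \tfrac{\sqrt2}{2}\le|\bar\nabla V|(q)\le\sqrt2 .$$ Moreover, for every real number $c$ there is a Killing vector field $V$ with $\big[\langle\bar\nabla_{e_1}V,e_3\rangle+\langle\bar\nabla_{e_2}V,e_4\rangle\big](q)=c$.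
   Context: $g_{FS}$, $J_{FS}$ are the Fubini–Study metric and complex structure on complex projective space $\mathbb{CP}^N$, $\langle\cdot,\cdot\rangle=g_{FS}$ and $\bar\nabla$ is its Levi-Civita connection; $|\bar\nabla V|(q)$ is the $g_{FS}$-norm of the endomorphism $X\mapsto\bar\nabla_XV$ of $T_q\mathbb{CP}^N$. *)

theory Defs
  imports "HOL-Analysis.Analysis"
begin

text \<open>Concrete model of (CP^N, g_FS, J_FS) as the quotient of the unit sphere
S in C^(N+1) (here complex^'n, N+1 = CARD('n)) by the circle action.
A point q = [z] is represented by a unit vector z; T_q CP^N is identified
(via the differential of the projection) with the horizontal space
H_z = {v. herm z v = 0}; g_FS is the real inner product (Re of the
Hermitian product) and J_FS is multiplication by i.\<close>

definition herm :: "complex^'n \<Rightarrow> complex^'n \<Rightarrow> complex" where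
  "herm z w = (\<Sum>i\<in>UNIV. cnj (z $ i) * w $ i)"

definition sphere_pts :: "(complex^'n) set" where
  "sphere_pts = {z. norm z = 1}"

definition horiz :: "complex^'n \<Rightarrow> (complex^'n) set" where
  "horiz z = {v. herm z v = 0}"

definition hproj :: "complex^'n \<Rightarrow> complex^'n \<Rightarrow> complex^'n" where
  "hproj z w = w - herm z w *s z"

definition JFS :: "complex^'n \<Rightarrow> complex^'n" where
  "JFS v = \<i> *s v"

text \<open>A C^1 vector field on CP^N, given by its horizontal, circle-equivariant
lift Vh to the sphere (extended arbitrarily, C^1 near the sphere).\<close>
definition is_vector_field :: "(complex^'n \<Rightarrow> complex^'n) \<Rightarrow> bool" where
  "is_vector_field Vh \<longleftrightarrow>
     (\<forall>z\<in>sphere_pts. herm z (Vh z) = 0) \<and>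
     (\<forall>z\<in>sphere_pts. \<forall>c::complex. norm c = 1 \<longrightarrow> Vh (c *s z) = c *s Vh z) \<and>
     (\<exists>D. (\<forall>z\<in>sphere_pts. (Vh has_derivative blinfun_apply (D z)) (at z))
          \<and> continuous_on sphere_pts D)"

text \<open>Levi-Civita covariant derivative of g_FS: horizontal part of the
Euclidean derivative of the horizontal lift (O'Neill).\<close>
definition cov :: "(complex^'n \<Rightarrow> complex^'n) \<Rightarrow> complex^'n \<Rightarrow> complex^'n \<Rightarrow> complex^'n" where
  "cov Vh z X = hproj z (frechet_derivative Vh (at z) X)"

definition is_killing :: "(complex^'n \<Rightarrow> complex^'n) \<Rightarrow> bool" where
  "is_killing Vh \<longleftrightarrow> is_vector_field Vh \<and>
     (\<forall>z\<in>sphere_pts. \<forall>X\<in>horiz z. \<forall>Y\<in>horiz z.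
        inner (cov Vh z X) Y + inner (cov Vh z Y) X = 0)"

text \<open>g_FS-norm (Hilbert-Schmidt) of the endomorphism X \<mapsto> cov Vh z X of T_q.
Computed in the ambient real Euclidean space via X \<mapsto> cov Vh z (hproj z X),
which vanishes on the orthogonal complement of H_z and maps into H_z.\<close>
definition nabla_norm :: "(complex^'n \<Rightarrow> complex^'n) \<Rightarrow> complex^'n \<Rightarrow> real" where
  "nabla_norm Vh z = sqrt (\<Sum>b\<in>Basis. (norm (cov Vh z (hproj z b)))\<^sup>2)"

end

theory Submission imports Defs begin


lemma herm_add_right: "herm z (x + y) = herm z x + herm z y"
  by (simp add: herm_def distrib_left sum.distrib)
lemma herm_add_left: "herm (x + y) w = herm x w + herm y w"
  by (simp add: herm_def distrib_right sum.distrib)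
lemma herm_diff_right: "herm z (x - y) = herm z x - herm z y"
  by (simp add: herm_def right_diff_distrib sum_subtractf)
lemma herm_diff_left: "herm (x - y) w = herm x w - herm y w"
  by (simp add: herm_def left_diff_distrib sum_subtractf)
lemma herm_minus_right: "herm z (- x) = - herm z x"
  by (simp add: herm_def sum_negf)
lemma herm_minus_left: "herm (- x) w = - herm x w"
  by (simp add: herm_def sum_negf)
lemma herm_smult_right: "herm z (a *s x) = a * herm z x"
  by (simp add: herm_def sum_distrib_left algebra_simps)
lemma herm_smult_left: "herm (a *s x) w = cnj a * herm x w"
  by (simp add: herm_def sum_distrib_left algebra_simps)
lemma herm_scaleR_right: "herm z (r *\<^sub>R x) = of_real r * herm z x"
  unfolding herm_def vector_scaleR_component by (simp add: sum_distrib_left algebra_simps scaleR_conv_of_real)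
lemma herm_scaleR_left: "herm (r *\<^sub>R x) w = of_real r * herm x w"
  unfolding herm_def vector_scaleR_component by (simp add: sum_distrib_left algebra_simps scaleR_conv_of_real)
lemma herm_zero_right[simp]: "herm z 0 = 0" by (simp add: herm_def)
lemma herm_zero_left[simp]: "herm 0 z = 0" by (simp add: herm_def)
lemma herm_cnj: "herm w z = cnj (herm z w)"
  by (simp add: herm_def mult.commute)
lemma inner_herm: "inner x y = Re (herm x y)"
  by (simp add: herm_def inner_vec_def Re_sum inner_complex_def)
lemma Im_herm: "Im (herm x y) = inner (JFS x) y"
  by (simp add: herm_def inner_vec_def Im_sum inner_complex_def JFS_def)
lemma herm_eq: "herm x y = Complex (inner x y) (inner (JFS x) y)"
  by (simp add: complex_eq_iff inner_herm Im_herm)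
lemma herm_self: "herm z z = of_real (norm z ^ 2)"
proof -
  have "Im (herm z z) = 0" by (simp add: herm_def Im_sum)
  moreover have "Re (herm z z) = norm z ^ 2" by (simp add: inner_herm[symmetric] power2_norm_eq_inner)
  ultimately show ?thesis by (simp add: complex_eq_iff)
qed
lemma smult_decomp: "h *s w = Re h *\<^sub>R w + Im h *\<^sub>R JFS w"
  by (simp add: vec_eq_iff JFS_def complex_eq_iff)

lemma herm_bound: "norm (herm a b) \<le> norm a * norm b * real CARD('n)" for a b :: "complex^'n"
proof -
    have "norm (herm a b) \<le> (\<Sum>i\<in>UNIV. norm (cnj (a $ i) * b $ i))"
      unfolding herm_def by (rule norm_sum)
    also have "\<dots> \<le> (\<Sum>i\<in>(UNIV::'n set). norm a * norm b)"
      by (intro sum_mono) (auto simp: norm_mult intro!: mult_mono Finite_Cartesian_Product.norm_nth_le)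
    finally show ?thesis by (simp add: mult.commute)
qed

lemma smult_bound: "norm (a *s b) \<le> norm a * norm b * real CARD('n)" for a :: complex and b :: "complex^'n"
proof -
    have "norm (a *s b) \<le> (\<Sum>i\<in>UNIV. norm ((a *s b) $ i))"
      unfolding norm_vec_def by (rule L2_set_le_sum) simp
    also have "\<dots> \<le> (\<Sum>i\<in>(UNIV::'n set). norm a * norm b)"
      by (intro sum_mono) (auto simp: norm_mult intro!: mult_left_mono Finite_Cartesian_Product.norm_nth_le)
    finally show ?thesis by (simp add: mult.commute)
qed

lemma herm_scaleR_left': "herm (r *\<^sub>R x) w = r *\<^sub>R herm x w"
  unfolding herm_def vector_scaleR_component by (simp add: scaleR_sum_right scaleR_conv_of_real algebra_simps sum_distrib_left)
lemma herm_scaleR_right': "herm x (r *\<^sub>R w) = r *\<^sub>R herm x w"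
  unfolding herm_def vector_scaleR_component by (simp add: scaleR_sum_right scaleR_conv_of_real algebra_simps sum_distrib_left)
lemma smult_scaleR1: "(r *\<^sub>R a) *s (b::complex^'n) = r *\<^sub>R (a *s b)"
  by (simp add: vec_eq_iff vector_scaleR_component)
lemma smult_scaleR2: "a *s (r *\<^sub>R (b::complex^'n)) = r *\<^sub>R (a *s b)"
  by (simp add: vec_eq_iff vector_scaleR_component)

lemma bb_herm: "bounded_bilinear (herm :: complex^'n \<Rightarrow> _)"
  by standard (auto simp only: herm_add_left herm_add_right herm_scaleR_left' herm_scaleR_right' intro!: exI[of _ "real CARD('n)"] herm_bound)

lemma bb_smult: "bounded_bilinear (\<lambda>(c::complex) (x::complex^'n). c *s x)"
  by standard (auto simp only: vector_sadd_rdistrib vector_add_ldistrib smult_scaleR1 smult_scaleR2 intro!: exI[of _ "real CARD('n)"] smult_bound)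


definition Vf :: "(complex^'n \<Rightarrow> complex^'n) \<Rightarrow> complex^'n \<Rightarrow> complex^'n" where
  "Vf A z = A z - herm z (A z) *s z"

definition DVf :: "(complex^'n \<Rightarrow> complex^'n) \<Rightarrow> complex^'n \<Rightarrow> complex^'n \<Rightarrow> complex^'n" where
  "DVf A z h = A h - (herm z (A h) + herm h (A z)) *s z - herm z (A z) *s h"

lemma Vf_deriv:
  assumes lin: "bounded_linear A"
  shows "(Vf A has_derivative DVf A z) (at z)"
proof -
  have d1: "((\<lambda>x. herm x (A x)) has_derivative (\<lambda>h. herm z (A h) + herm h (A z))) (at z)"
    by (rule bounded_bilinear.FDERIV[OF bb_herm has_derivative_ident bounded_linear.has_derivative[OF lin has_derivative_ident]])
  have d2: "((\<lambda>x. herm x (A x) *s x) has_derivative (\<lambda>h. herm z (A z) *s h + (herm z (A h) + herm h (A z)) *s z)) (at z)"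
    by (rule bounded_bilinear.FDERIV[OF bb_smult d1 has_derivative_ident])
  have "((\<lambda>x. A x - herm x (A x) *s x) has_derivative (\<lambda>h. A h - (herm z (A z) *s h + (herm z (A h) + herm h (A z)) *s z))) (at z)"
    by (rule has_derivative_diff[OF bounded_linear.has_derivative[OF lin has_derivative_ident] d2])
  then show ?thesis unfolding Vf_def DVf_def
    by (rule has_derivative_eq_rhs) (auto simp: fun_eq_iff algebra_simps)
qed

lemma inner_hproj: "herm z Y = 0 \<Longrightarrow> inner (hproj z W) Y = Re (herm W Y)"
  by (simp add: inner_herm hproj_def herm_diff_left herm_smult_left)

lemma killing_Vf:
  fixes A :: "complex^'n \<Rightarrow> complex^'n"
  assumes lin: "bounded_linear A"
    and cl: "\<And>a w. A (a *s w) = a *s A w"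
    and skew: "\<And>w w'. herm (A w) w' = - herm w (A w')"
  shows "is_killing (Vf A)"
  unfolding is_killing_def is_vector_field_def
proof (intro conjI ballI allI impI)
  fix z :: "complex^'n" assume z: "z \<in> sphere_pts"
  then have zz: "herm z z = 1" by (simp add: sphere_pts_def herm_self)
  show "herm z (Vf A z) = 0" by (simp add: Vf_def herm_diff_right herm_smult_right zz)
  fix c :: complex assume c: "norm c = 1"
  have cc: "cnj c * c = 1" using c by (metis complex_norm_square mult.commute of_real_1 power_one)
  show "Vf A (c *s z) = c *s Vf A z"
    by (simp add: Vf_def cl herm_smult_left herm_smult_right vector_ssub_ldistrib vector_smult_assoc
       mult.assoc[symmetric] cc)
next
  show "\<exists>D. (\<forall>z\<in>sphere_pts. (Vf A has_derivative blinfun_apply (D z)) (at z)) \<and> continuous_on sphere_pts D"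
  proof (intro exI conjI ballI)
    fix z :: "complex^'n"
    show "(Vf A has_derivative blinfun_apply (Blinfun (DVf A z))) (at z)"
      using Vf_deriv[OF lin, of z] by (simp add: bounded_linear_Blinfun_apply has_derivative_bounded_linear)
  next
    show "continuous_on sphere_pts (\<lambda>z. Blinfun (DVf A z))"
    proof (rule continuous_on_blinfun_componentwise)
      fix i :: "complex^'n"
      have "continuous_on sphere_pts (\<lambda>z. DVf A z i)" unfolding DVf_def
        by (intro continuous_intros bounded_bilinear.continuous_on[OF bb_herm] bounded_bilinear.continuous_on[OF bb_smult] linear_continuous_on lin)
      moreover have "blinfun_apply (Blinfun (DVf A z)) = DVf A z" for z
        using bounded_linear_Blinfun_apply[OF has_derivative_bounded_linear[OF Vf_deriv[OF lin, of z]]] .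
      ultimately show "continuous_on sphere_pts (\<lambda>z. blinfun_apply (Blinfun (DVf A z)) i)"
        by simp
    qed
  qed
next
  fix z X Y :: "complex^'n" assume z: "z \<in> sphere_pts" and X: "X \<in> horiz z" and Y: "Y \<in> horiz z"
  have hX: "herm z X = 0" and hY: "herm z Y = 0" using X Y by (auto simp: horiz_def)
  have cov: "cov (Vf A) z W = hproj z (DVf A z W)" for W
    unfolding cov_def using frechet_derivative_at[OF Vf_deriv[OF lin, of z]] by simp
  define l where "l = herm z (A z)"
  have l: "cnj l = - l" unfolding l_def using skew[of z z] herm_cnj[of "A z" z] by simp
  then have Rel: "Re l = 0" by (metis add.inverse_neutral cnj.sel(1) equation_minus_iff uminus_complex.sel(1) neg_equal_zero)
  have e1: "herm (DVf A z X) Y = herm (A X) Y - cnj l * herm X Y"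
    by (simp add: DVf_def herm_diff_left herm_add_left herm_smult_left hY l_def)
  have e2: "herm (DVf A z Y) X = herm (A Y) X - cnj l * herm Y X"
    by (simp add: DVf_def herm_diff_left herm_add_left herm_smult_left hX l_def)
  have s: "herm (A Y) X = - cnj (herm (A X) Y)"
    using skew[of Y X] herm_cnj[of X "A Y"] herm_cnj[of "A X" Y] by simp
  show "inner (cov (Vf A) z X) Y + inner (cov (Vf A) z Y) X = 0"
    unfolding cov inner_hproj[OF hY] inner_hproj[OF hX] e1 e2 s
    using Rel herm_cnj[of Y X] by (simp add: l)
qed


lemma cnj_herm: "cnj (herm z w) = herm w z"
  by (simp add: herm_cnj[of w z])

definition Bop :: "real \<Rightarrow> complex^'n \<Rightarrow> complex^'n \<Rightarrow> complex^'n \<Rightarrow> complex^'n" where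
  "Bop r u p w = r *\<^sub>R (herm u w *s p - herm p w *s u)"

lemma Bop_bl: "bounded_linear (Bop r u p)"
proof -
  have "bounded_linear (\<lambda>w. herm u w *s p)"
    by (rule bounded_linear_compose[OF bounded_bilinear.bounded_linear_left[OF bb_smult] bounded_bilinear.bounded_linear_right[OF bb_herm]])
  moreover have "bounded_linear (\<lambda>w. herm p w *s u)"
    by (rule bounded_linear_compose[OF bounded_bilinear.bounded_linear_left[OF bb_smult] bounded_bilinear.bounded_linear_right[OF bb_herm]])
  ultimately have "bounded_linear (\<lambda>w. herm u w *s p - herm p w *s u)"
    by (rule bounded_linear_sub)
  from bounded_linear_compose[OF bounded_linear_scaleR_right this] show ?thesis unfolding Bop_def .
qed

lemma Bop_cl: "Bop r u p (a *s w) = a *s Bop r u p w"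
  by (simp add: Bop_def herm_smult_right vector_smult_assoc vector_ssub_ldistrib vec_eq_iff vector_scaleR_component algebra_simps)

lemma Bop_skew: "herm (Bop r u p w) w' = - herm w (Bop r u p w')"
  by (simp add: Bop_def herm_scaleR_left herm_scaleR_right herm_diff_left herm_diff_right herm_smult_left herm_smult_right cnj_herm algebra_simps)

lemma JFS_add: "JFS (x + y) = JFS x + JFS y" by (simp add: JFS_def vector_add_ldistrib)
lemma JFS_diff: "JFS (x - y) = JFS x - JFS y" by (simp add: JFS_def vector_ssub_ldistrib)
lemma JFS_minus: "JFS (- x) = - JFS x" by (simp add: JFS_def vec_eq_iff)
lemma JFS_scaleR: "JFS (r *\<^sub>R x) = r *\<^sub>R JFS x" by (simp add: JFS_def vec_eq_iff vector_scaleR_component)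
lemma inner_JJ: "inner (JFS x) (JFS y) = inner x y"
  by (simp add: JFS_def inner_vec_def inner_complex_def algebra_simps)
lemma inner_J_self: "inner x (JFS x) = 0"
  by (simp add: JFS_def inner_vec_def inner_complex_def algebra_simps)
lemma inner_J_swap: "inner (JFS x) y = - inner x (JFS y)"
  by (simp add: JFS_def inner_vec_def inner_complex_def algebra_simps sum_negf[symmetric])

lemma parseval:
  fixes f g :: "nat \<Rightarrow> 'a::euclidean_space"
  shows "(\<Sum>b\<in>Basis. (norm (\<Sum>k<n. inner (f k) b *\<^sub>R g k))\<^sup>2) = (\<Sum>k<n. \<Sum>l<n. inner (f k) (f l) * inner (g k) (g l))"
proof -
  have pw: "(norm (\<Sum>k<n. inner (f k) b *\<^sub>R g k))\<^sup>2 = (\<Sum>k<n. \<Sum>l<n. inner (f k) b * (inner (f l) b * inner (g l) (g k)))" for b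
    by (simp only: power2_norm_eq_inner inner_sum_left inner_sum_right inner_scaleR_left inner_scaleR_right sum_distrib_left)
  have "(\<Sum>b\<in>Basis. (norm (\<Sum>k<n. inner (f k) b *\<^sub>R g k))\<^sup>2)
      = (\<Sum>k<n. \<Sum>l<n. \<Sum>b\<in>Basis. inner (f k) b * (inner (f l) b * inner (g l) (g k)))"
    unfolding pw by (subst sum.swap) (rule sum.cong[OF refl], rule sum.swap)
  also have "\<dots> = (\<Sum>k<n. \<Sum>l<n. inner (g l) (g k) * (\<Sum>b\<in>Basis. inner (f k) b * inner (f l) b))"
    by (simp add: sum_distrib_left mult_ac)
  also have "\<dots> = (\<Sum>k<n. \<Sum>l<n. inner (f k) (f l) * inner (g k) (g l))"
    by (intro sum.cong refl) (metis euclidean_inner inner_commute mult.commute)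
  finally show ?thesis .
qed


theorem lemma4p2:
  fixes z e1 e2 e3 e4 :: "complex^'n" and \<alpha> :: real
  assumes "z \<in> sphere_pts"
    and "0 \<le> \<alpha>" and "\<alpha> \<le> pi"
    and "e1 \<in> horiz z" "e2 \<in> horiz z" "e3 \<in> horiz z" "e4 \<in> horiz z"
    and "inner e1 e1 = 1" "inner e2 e2 = 1" "inner e3 e3 = 1" "inner e4 e4 = 1"
    and "inner e1 e2 = 0" "inner e1 e3 = 0" "inner e1 e4 = 0"
    and "inner e2 e3 = 0" "inner e2 e4 = 0" "inner e3 e4 = 0"
    and "JFS e1 = cos \<alpha> *\<^sub>R e2 + sin \<alpha> *\<^sub>R e3"
    and "JFS e2 = - cos \<alpha> *\<^sub>R e1 - sin \<alpha> *\<^sub>R e4"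
    and "JFS e3 = - sin \<alpha> *\<^sub>R e1 + cos \<alpha> *\<^sub>R e4"
  shows "(\<exists>V. is_killing V \<and>
            inner (cov V z e1) e3 + inner (cov V z e2) e4 = 1 \<and>
            sqrt 2 / 2 \<le> nabla_norm V z \<and> nabla_norm V z \<le> sqrt 2)
       \<and> (\<forall>c::real. \<exists>V. is_killing V \<and>
            inner (cov V z e1) e3 + inner (cov V z e2) e4 = c)"
proof -
  define s where "s = sin \<alpha>"
  define c where "c = cos \<alpha>"
  have sc: "s\<^sup>2 + c\<^sup>2 = 1" unfolding s_def c_def by simp
  have J1: "JFS e1 = c *\<^sub>R e2 + s *\<^sub>R e3" using assms(18) by (simp add: s_def c_def)
  have J3: "JFS e3 = - s *\<^sub>R e1 + c *\<^sub>R e4" using assms(20) by (simp add: s_def c_def)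
  have hz1: "herm z e1 = 0" and hz3: "herm z e3 = 0" using assms(4,6) by (auto simp: horiz_def)
  have o: "inner e1 e1 = 1" "inner e2 e2 = 1" "inner e3 e3 = 1" "inner e4 e4 = 1"
    "inner e1 e2 = 0" "inner e1 e3 = 0" "inner e1 e4 = 0"
    "inner e2 e3 = 0" "inner e2 e4 = 0" "inner e3 e4 = 0"
    "inner e2 e1 = 0" "inner e3 e1 = 0" "inner e4 e1 = 0"
    "inner e3 e2 = 0" "inner e4 e2 = 0" "inner e4 e3 = 0"
    using assms(8-17) by (auto simp: inner_commute)
  have j11: "inner (JFS e1) e1 = 0" and j12: "inner (JFS e1) e2 = c" and j13: "inner (JFS e1) e3 = s"
    and j14: "inner (JFS e1) e4 = 0"
    unfolding J1 by (simp_all add: inner_add_left o)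
  have j31: "inner (JFS e3) e1 = - s" and j32: "inner (JFS e3) e2 = 0" and j33: "inner (JFS e3) e3 = 0"
    and j34: "inner (JFS e3) e4 = c"
    unfolding J3 by (simp_all add: inner_add_left inner_diff_left o)
  have h11: "herm e1 e1 = 1" using o j11 by (simp add: herm_eq complex_eq_iff)
  have h33: "herm e3 e3 = 1" using o j33 by (simp add: herm_eq complex_eq_iff)
  have h13: "herm e1 e3 = \<i> * of_real s" using o j13 by (simp add: herm_eq complex_eq_iff)
  have h31: "herm e3 e1 = - \<i> * of_real s" using o j31 by (simp add: herm_eq complex_eq_iff)
  have h12: "herm e1 e2 = \<i> * of_real c" using o j12 by (simp add: herm_eq complex_eq_iff)
  have h32: "herm e3 e2 = 0" using o j32 by (simp add: herm_eq complex_eq_iff)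
  have h14: "herm e1 e4 = 0" using o j14 by (simp add: herm_eq complex_eq_iff)
  have h34: "herm e3 e4 = \<i> * of_real c" using o j34 by (simp add: herm_eq complex_eq_iff)
  define A where "A r = Bop r e1 e3" for r
  have Az: "A r z = 0" for r
    by (simp add: A_def Bop_def herm_cnj[of e1 z] herm_cnj[of e3 z] hz1 hz3)
  have hzA: "herm z (A r h) = 0" for r h
    by (simp add: A_def Bop_def herm_scaleR_right herm_diff_right herm_smult_right hz1 hz3)
  have covA: "cov (Vf (A r)) z h = A r h" for r h
  proof -
    have "frechet_derivative (Vf (A r)) (at z) = DVf (A r) z"
      using frechet_derivative_at[OF Vf_deriv[OF Bop_bl[of r e1 e3]]] by (simp add: A_def)
    then show ?thesis by (simp add: cov_def DVf_def Az hzA hproj_def)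
  qed
  have kil: "is_killing (Vf (A r))" for r
    unfolding A_def by (rule killing_Vf[OF Bop_bl Bop_cl Bop_skew])
  have val: "inner (cov (Vf (A r)) z e1) e3 + inner (cov (Vf (A r)) z e2) e4 = 2 * r" for r
  proof -
    have a1: "herm (A r e1) e3 = of_real r * (1 + of_real s * of_real s)"
      unfolding A_def Bop_def herm_scaleR_left herm_diff_left herm_smult_left h11 h33 h13 h31 by (simp add: field_simps)
    have a2: "herm (A r e2) e4 = of_real r * (of_real c * of_real c)"
      unfolding A_def Bop_def herm_scaleR_left herm_diff_left herm_smult_left h12 h32 h14 h34 by (simp add: field_simps)
    have "inner (cov (Vf (A r)) z e1) e3 + inner (cov (Vf (A r)) z e2) e4 = r * (1 + s\<^sup>2 + c\<^sup>2)"
      unfolding covA inner_herm a1 a2 by (simp add: power2_eq_square algebra_simps)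
    then show ?thesis using sc by simp
  qed
  define F where "F k = [e1, JFS e1, e3, JFS e3] ! k" for k
  define G where "G r k = r *\<^sub>R ([e3, JFS e3, - e1, - JFS e1] ! k)" for r k
  have hp: "A r (hproj z b) = A r b" for r b
  proof -
    have "A r (hproj z b) = A r b - A r (herm z b *s z)"
      unfolding hproj_def A_def by (rule linear_diff[OF bounded_linear.linear[OF Bop_bl]])
    also have "\<dots> = A r b" by (simp add: A_def Bop_cl Az[unfolded A_def])
    finally show ?thesis .
  qed
  have dec: "A r b = (\<Sum>k<4. inner (F k) b *\<^sub>R G r k)" for r b
    by (simp add: A_def Bop_def smult_decomp inner_herm[symmetric] Im_herm F_def G_def numeral_eq_Suc algebra_simps)
  have g: "inner e1 (JFS e1) = 0" "inner e1 (JFS e3) = - s" "inner (JFS e1) (JFS e1) = 1"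
    "inner (JFS e1) (JFS e3) = 0" "inner e3 (JFS e1) = s" "inner e3 (JFS e3) = 0"
    "inner (JFS e3) (JFS e1) = 0" "inner (JFS e3) (JFS e3) = 1"
    using inner_J_self[of e1] inner_J_self[of e3] inner_JJ[of e1 e1] inner_JJ[of e1 e3] inner_JJ[of e3 e1] inner_JJ[of e3 e3]
      inner_J_swap[of e1 e3] inner_J_swap[of e3 e1] j13 j31 o by auto
  have nn: "nabla_norm (Vf (A (1/2))) z = sqrt (1 + s\<^sup>2)"
  proof -
    have "(\<Sum>k<4. \<Sum>l<4. inner (F k) (F l) * inner (G (1/2) k) (G (1/2) l)) = 1 + s\<^sup>2"
      by (simp add: F_def G_def numeral_eq_Suc g o j11 j13 j31 j33 power2_eq_square algebra_simps)
    then show ?thesis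
      unfolding nabla_norm_def covA hp unfolding dec parseval by simp
  qed
  have b1: "sqrt 2 / 2 \<le> sqrt (1 + s\<^sup>2)"
  proof -
    have "sqrt 2 / 2 \<le> 1" using sqrt2_less_2 by simp
    also have "1 \<le> sqrt (1 + s\<^sup>2)" by simp
    finally show ?thesis .
  qed
  have b2: "sqrt (1 + s\<^sup>2) \<le> sqrt 2"
    using sc by (simp add: real_sqrt_le_mono) (smt (verit) zero_le_power2)
  show ?thesis
  proof (intro conjI allI exI)
    show "is_killing (Vf (A (1/2)))" by (rule kil)
    show "inner (cov (Vf (A (1/2))) z e1) e3 + inner (cov (Vf (A (1/2))) z e2) e4 = 1" using val[of "1/2"] by simp
    show "sqrt 2 / 2 \<le> nabla_norm (Vf (A (1/2))) z" using nn b1 by simp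
    show "nabla_norm (Vf (A (1/2))) z \<le> sqrt 2" using nn b2 by simp
  next
    fix c' :: real
    show "is_killing (Vf (A (c'/2)))" by (rule kil)
    show "inner (cov (Vf (A (c'/2))) z e1) e3 + inner (cov (Vf (A (c'/2))) z e2) e4 = c'" using val[of "c'/2"] by simp
  qed
qed

end
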